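(* For every integer $k\ge1$, \begin{align*} \sum_{n=1}^\infty\frac{H_n^{(k)}}{n^3}&=\zeta(k+3)+\zeta(3,k),\\ \sum_{n=1}^\infty\frac{P_k(H_n,\dots,H_n^{(k)})}{n^3}&=\zeta(k+2,1)+\zeta(k+1,1,1),\\ \sum_{n=1}^\infty\frac{Q_k(H_n,\dots,H_n^{(k)})}{n^3}&=\zeta(k+3)+\sum_{j=2}^{k+1}S^T_{k+3,j}. \end{align*}
   Context: $H_n^{(r)}=\sum_{t=1}^n t^{-r}$, $H_n=H_n^{(1)}$. For $n\ge1$, $P_n(y_1,\dots,y_n)=\sum_{m_1+2m_2+\cdots=n}\frac{(-1)^{m_2+m_4+\cdots}}{m_1!m_2!\cdots}\prod_{i\ge1}(y_i/i)^{m_i}$ and $Q_n(y_1,\dots,y_n)=\sum_{m_1+2m_2+\cdots=n}\frac{1}{m_1!m_2!\cdots}\prod_{i\ge1}(y_i/i)^{m_i}$. Multiple zeta values: $\zeta(a_1,\dots,a_k)=\sum_{n_1>\cdots>n_k\ge1}n_1^{-a_1}\cdots n_k^{-a_k}$ ($a_r\ge1$, $a_1\ge2$), of weight $a_1+\cdots+a_k$ and depth $k$. $S^T_{N,d}$ is the sum of all multiple zeta values $\zeta(a_1,\dots,a_d)$ of weight $N$ and depth $d$ with $a_1\ge3$. *)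

theory Defs
  imports "HOL-Analysis.Analysis"
begin

definition harm :: "nat \<Rightarrow> nat \<Rightarrow> real" where
  "harm r n = (\<Sum>t=1..n. 1 / real t ^ r)"

definition mzv :: "nat list \<Rightarrow> real" where
  "mzv as = (\<Sum>\<^sub>\<infinity> ns \<in> {ns. length ns = length as \<and> sorted_wrt (>) ns \<and> (\<forall>n\<in>set ns. 1 \<le> n)}.
              \<Prod>i<length as. 1 / real (ns ! i) ^ (as ! i))"

definition partvecs :: "nat \<Rightarrow> (nat \<Rightarrow> nat) set" where
  "partvecs n = {m. (\<forall>i. m i \<noteq> 0 \<longrightarrow> i \<in> {1..n}) \<and> (\<Sum>i=1..n. i * m i) = n}"

definition polyP :: "nat \<Rightarrow> (nat \<Rightarrow> real) \<Rightarrow> real" where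
  "polyP n y = (\<Sum>m\<in>partvecs n.
      (-1) ^ (\<Sum>i\<in>{i\<in>{1..n}. even i}. m i) / (\<Prod>i=1..n. fact (m i))
      * (\<Prod>i=1..n. (y i / real i) ^ m i))"

definition polyQ :: "nat \<Rightarrow> (nat \<Rightarrow> real) \<Rightarrow> real" where
  "polyQ n y = (\<Sum>m\<in>partvecs n.
      1 / (\<Prod>i=1..n. fact (m i)) * (\<Prod>i=1..n. (y i / real i) ^ m i))"

definition ST :: "nat \<Rightarrow> nat \<Rightarrow> real" where
  "ST N d = (\<Sum>as\<in>{as. length as = d \<and> sum_list as = N \<and> (\<forall>a\<in>set as. 1 \<le> a) \<and> 3 \<le> hd as}. mzv as)"

end

theory Submission
  imports Defs "HOL-Analysis.Analysis"
begin


fun Zf :: "nat \<Rightarrow> nat list \<Rightarrow> real" where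
  "Zf N [] = 1"
| "Zf N (a#as) = (\<Sum>n=1..N. 1 / real n ^ a * Zf (n-1) as)"

definition Top :: "nat list \<Rightarrow> nat \<Rightarrow> real" where
  "Top as n = (case as of [] \<Rightarrow> (if n = 0 then 1 else 0)
     | a#r \<Rightarrow> (if n = 0 then 0 else 1 / real n ^ a * Zf (n-1) r))"

lemma Top_Cons: "Top (a#r) n = (if n = 0 then 0 else 1 / real n ^ a * Zf (n-1) r)"
  by (simp add: Top_def)
lemma Top_Nil: "Top [] n = (if n = 0 then 1 else 0)"
  by (simp add: Top_def)

lemma Zf_nonneg: "0 \<le> Zf N as"
  by (induction as arbitrary: N) (auto intro!: sum_nonneg)

lemma Top_nonneg: "0 \<le> Top as n"
  by (auto simp: Top_def Zf_nonneg split: list.splits)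

lemma Zf_Top: "Zf N as = (\<Sum>n\<le>N. Top as n)"
proof (cases as)
  case Nil
  then show ?thesis by (simp add: Top_def sum.delta)
next
  case (Cons a r)
  have "(\<Sum>n\<le>N. Top as n) = (\<Sum>n\<in>{1..N}. Top as n)"
    by (rule sum.mono_neutral_right) (auto simp: Top_def Cons)
  then show ?thesis by (simp add: Cons Top_def)
qed

definition Cn :: "nat \<Rightarrow> nat \<Rightarrow> real" where
  "Cn m n = fact m * fact n / fact (m + n)"

lemma Cn_sym: "Cn m n = Cn n m" by (simp add: Cn_def add.commute mult.commute)
lemma Cn_0: "Cn m 0 = 1" by (simp add: Cn_def)
lemma Cn_nonneg: "0 \<le> Cn m n" by (simp add: Cn_def)

lemma Cn_Suc: "Cn m (Suc n) = Cn m n * real (Suc n) / real (m + Suc n)"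
  by (simp add: Cn_def fact_Suc field_simps del: of_nat_Suc) 

lemma Cn_step: assumes "1 \<le> m" shows "Cn m (Suc n) / real (Suc n) = (Cn m n - Cn m (Suc n)) / real m"
proof -
  have "real (m + Suc n) > 0" by simp
  then show ?thesis using assms unfolding Cn_Suc
    by (simp add: field_simps del: of_nat_Suc of_nat_add) (simp add: algebra_simps)
qed

lemma Cn_le: assumes "1 \<le> m" shows "Cn m M \<le> 1 / real (Suc M)"
  using assms
proof (induction m)
  case 0 then show ?case by simp
next
  case (Suc m)
  show ?case
  proof (cases "m = 0")
    case True
    then show ?thesis by (simp add: Cn_def fact_Suc field_simps)
  next
    case False
    have "Cn (Suc m) M = Cn m M * (real (Suc m) / real (Suc m + M))"
      by (simp add: Cn_def fact_Suc field_simps)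
    also have "\<dots> \<le> Cn m M * 1"
      by (intro mult_left_mono) (auto simp: Cn_nonneg)
    finally show ?thesis using Suc False by simp
  qed
qed

lemma Cn_tendsto: assumes "1 \<le> m" shows "(\<lambda>M. Cn m M) \<longlonglongrightarrow> 0"
proof (rule tendsto_sandwich[where f="\<lambda>_. 0" and h="\<lambda>M. 1 / real (Suc M)"])
  show "\<forall>\<^sub>F n in sequentially. 0 \<le> Cn m n" by (simp add: Cn_nonneg)
  show "\<forall>\<^sub>F n in sequentially. Cn m n \<le> 1 / real (Suc n)" using Cn_le[OF assms] by simp
  show "(\<lambda>n. 1 / real (Suc n)) \<longlonglongrightarrow> 0"
    using LIMSEQ_inverse_real_of_nat by (simp add: inverse_eq_divide)
qed simp

lemma Cn_tail_sums: assumes "1 \<le> m"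
  shows "(\<lambda>j. Cn m (Suc (n0 + j)) / real (Suc (n0 + j))) sums (Cn m n0 / real m)"
proof -
  have ps: "(\<Sum>j<J. Cn m (Suc (n0 + j)) / real (Suc (n0 + j))) = (Cn m n0 - Cn m (n0 + J)) / real m" for J
  proof (induction J)
    case 0 then show ?case by simp
  next
    case (Suc J)
    then show ?case using Cn_step[OF assms, of "n0 + J"] by (simp add: diff_divide_distrib)
  qed
  have "(\<lambda>J. (Cn m n0 - Cn m (n0 + J)) / real m) \<longlonglongrightarrow> (Cn m n0 - 0) / real m"
    using Cn_tendsto[OF assms] LIMSEQ_ignore_initial_segment[of "Cn m" 0 n0] assms
    by (intro tendsto_intros) (auto simp: add.commute)
  then show ?thesis unfolding sums_def ps by simp
qed


lemma suminf_swap_ennreal: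
  fixes f :: "nat \<Rightarrow> nat \<Rightarrow> ennreal"
  shows "(\<Sum>i. \<Sum>j. f i j) = (\<Sum>j. \<Sum>i. f i j)"
proof -
  have "(\<Sum>i. \<Sum>j. f i j) = (\<integral>\<^sup>+i. \<integral>\<^sup>+j. f i j \<partial>count_space UNIV \<partial>count_space UNIV)"
    by (simp add: nn_integral_count_space_nat)
  also have "\<dots> = integral\<^sup>N (count_space UNIV) (\<lambda>(i,j). f i j)"
    using nn_integral_fst_count_space[of "\<lambda>(i,j). f i j"] by simp
  also have "\<dots> = (\<integral>\<^sup>+j. \<integral>\<^sup>+i. f i j \<partial>count_space UNIV \<partial>count_space UNIV)"
    using nn_integral_snd_count_space[of "\<lambda>(i,j). f i j"] by simp
  also have "\<dots> = (\<Sum>j. \<Sum>i. f i j)"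
    by (simp add: nn_integral_count_space_nat)
  finally show ?thesis .
qed

lemma tail_ennreal: assumes "1 \<le> m"
  shows "(\<Sum>n. ennreal (if n0 < n then Cn m n / real n else 0)) = ennreal (Cn m n0 / real m)"
proof -
  define g where "g = (\<lambda>n. if n0 < n then Cn m n / real n else 0)"
  have "(\<lambda>j. g (j + Suc n0)) = (\<lambda>j. Cn m (Suc (n0 + j)) / real (Suc (n0 + j)))"
    by (auto simp: g_def add.commute)
  then have "(\<lambda>j. g (j + Suc n0)) sums (Cn m n0 / real m)"
    using Cn_tail_sums[OF assms, of n0] by simp
  then have "g sums (Cn m n0 / real m + (\<Sum>i<Suc n0. g i))"
    using sums_iff_shift by blast
  moreover have "(\<Sum>i<Suc n0. g i) = 0" by (simp add: g_def)
  ultimately have s: "g sums (Cn m n0 / real m)" by simp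
  have nn: "\<And>n. 0 \<le> g n" by (simp add: g_def Cn_nonneg)
  have "(\<Sum>n. ennreal (g n)) = ennreal (suminf g)"
    using suminf_ennreal2[of g, OF nn] s by (simp add: sums_iff)
  then show ?thesis using s unfolding g_def by (simp add: sums_iff)
qed

lemma transport1: assumes "1 \<le> m"
  shows "(\<Sum>n. ennreal (Top (1#l) n * Cn m n)) = ennreal (1 / real m) * (\<Sum>n. ennreal (Top l n * Cn m n))"
proof -
  have eq: "ennreal (Top (1#l) n * Cn m n) = (\<Sum>n'. ennreal (if n' < n then Top l n' * (Cn m n / real n) else 0))" for n
  proof -
    have "Top (1#l) n * Cn m n = (\<Sum>n'<n. Top l n' * (Cn m n / real n))"
    proof (cases n)
      case 0 then show ?thesis by (simp add: Top_def)
    next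
      case (Suc n1)
      have "Zf n1 l = (\<Sum>n'<n. Top l n')" using Zf_Top[of n1 l] Suc lessThan_Suc_atMost by simp
      then show ?thesis by (simp add: Top_Cons Suc sum_distrib_right sum_divide_distrib del: sum.lessThan_Suc)
    qed
    also have "ennreal \<dots> = (\<Sum>n'<n. ennreal (Top l n' * (Cn m n / real n)))"
      by (rule sum_ennreal[symmetric]) (simp add: Top_nonneg Cn_nonneg)
    also have "\<dots> = (\<Sum>n'. ennreal (if n' < n then Top l n' * (Cn m n / real n) else 0))"
      by (subst suminf_finite[of "{..<n}"]) auto
    finally show ?thesis .
  qed
  have "(\<Sum>n. ennreal (Top (1#l) n * Cn m n)) = (\<Sum>n. \<Sum>n'. ennreal (if n' < n then Top l n' * (Cn m n / real n) else 0))"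
    by (intro suminf_cong eq)
  also have "\<dots> = (\<Sum>n'. \<Sum>n. ennreal (if n' < n then Top l n' * (Cn m n / real n) else 0))"
    by (rule suminf_swap_ennreal)
  also have "\<dots> = (\<Sum>n'. ennreal (Top l n') * (\<Sum>n. ennreal (if n' < n then Cn m n / real n else 0)))"
  proof (intro suminf_cong)
    fix n'
    have "ennreal (if n' < n then Top l n' * (Cn m n / real n) else 0) = ennreal (Top l n') * ennreal (if n' < n then Cn m n / real n else 0)" for n
      by (simp add: ennreal_mult[symmetric] Top_nonneg Cn_nonneg del: times_divide_eq_right)
    then show "(\<Sum>n. ennreal (if n' < n then Top l n' * (Cn m n / real n) else 0)) = ennreal (Top l n') * (\<Sum>n. ennreal (if n' < n then Cn m n / real n else 0))"
      by simp
  qed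
  also have "\<dots> = (\<Sum>n'. ennreal (Top l n') * ennreal (Cn m n' / real m))"
    by (simp add: tail_ennreal[OF assms])
  also have "\<dots> = (\<Sum>n'. ennreal (1 / real m) * ennreal (Top l n' * Cn m n'))"
    by (auto intro!: suminf_cong simp: ennreal_mult''[symmetric] Top_nonneg Cn_nonneg)
  also have "\<dots> = ennreal (1 / real m) * (\<Sum>n. ennreal (Top l n * Cn m n))"
    by simp
  finally show ?thesis .
qed


definition CS :: "nat list \<Rightarrow> nat list \<Rightarrow> ennreal" where
  "CS k l = (\<Sum>m. \<Sum>n. ennreal (Top k m * Cn m n * Top l n))"

definition E :: "nat list \<Rightarrow> ennreal" where
  "E k = (\<Sum>m. ennreal (Top k m))"

lemma CS_sym: "CS k l = CS l k"
  unfolding CS_def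
  by (subst suminf_swap_ennreal) (simp add: Cn_sym mult.commute mult.left_commute)

lemma CS_Nil: "CS k [] = E k"
  unfolding CS_def E_def
proof (intro suminf_cong)
  fix m
  show "(\<Sum>n. ennreal (Top k m * Cn m n * Top [] n)) = ennreal (Top k m)"
    by (subst suminf_finite[of "{0}"]) (auto simp: Top_Nil Cn_0)
qed

lemma CS_transport: assumes "1 \<le> c" shows "CS (c#r) (1#l) = CS (Suc c # r) l"
  unfolding CS_def
proof (rule suminf_cong)
  fix m
  show "(\<Sum>n. ennreal (Top (c # r) m * Cn m n * Top (1 # l) n)) =
        (\<Sum>n. ennreal (Top (Suc c # r) m * Cn m n * Top l n))"
  proof (cases "m = 0")
    case True then show ?thesis by (simp add: Top_Cons)
  next
    case False
    then have m1: "1 \<le> m" by simp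
    have "(\<Sum>n. ennreal (Top (c # r) m * Cn m n * Top (1 # l) n))
        = (\<Sum>n. ennreal (Top (c # r) m) * ennreal (Top (1 # l) n * Cn m n))"
      by (intro suminf_cong) (simp add: ennreal_mult[symmetric] Top_nonneg Cn_nonneg mult_ac)
    also have "\<dots> = ennreal (Top (c # r) m) * (ennreal (1 / real m) * (\<Sum>n. ennreal (Top l n * Cn m n)))"
      by (simp only: ennreal_suminf_cmult transport1[OF m1])
    also have "\<dots> = (\<Sum>n. ennreal (Top (c # r) m * (1 / real m)) * ennreal (Top l n * Cn m n))"
    proof -
      have X: "ennreal (Top (c # r) m * (1 / real m)) = ennreal (Top (c # r) m) * ennreal (1 / real m)"
        by (rule ennreal_mult) (auto simp: Top_nonneg)
      show ?thesis by (simp only: ennreal_suminf_cmult X mult.assoc)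
    qed
    also have "\<dots> = (\<Sum>n. ennreal (Top (Suc c # r) m * Cn m n * Top l n))"
    proof -
      have T: "Top (Suc c # r) m = Top (c#r) m * (1 / real m)"
        using False by (simp add: Top_Cons)
      have eqn: "ennreal (Top (c#r) m * (1 / real m)) * ennreal (Top l n * Cn m n) = ennreal (Top (Suc c # r) m * Cn m n * Top l n)" for n
      proof -
        have "ennreal (Top (c#r) m * (1 / real m)) * ennreal (Top l n * Cn m n) = ennreal (Top (c#r) m * (1 / real m) * (Top l n * Cn m n))"
          by (rule ennreal_mult[symmetric]) (auto simp: Top_nonneg Cn_nonneg)
        then show ?thesis by (simp only: T mult_ac)
      qed
      show ?thesis by (simp only: eqn)
    qed
    finally show ?thesis .
  qed
qed

lemma CS_transport_rep: assumes "1 \<le> c" shows "CS (c#r) (replicate j 1 @ l) = CS ((c + j) # r) l"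
  using assms
proof (induction j arbitrary: c)
  case 0 then show ?case by simp
next
  case (Suc j)
  have "CS (c#r) (replicate (Suc j) 1 @ l) = CS (Suc c # r) (replicate j 1 @ l)"
    using CS_transport[OF Suc.prems] by simp
  also have "\<dots> = CS ((Suc c + j) # r) l" by (rule Suc.IH) simp
  finally show ?case by simp
qed

lemma E_dual1: "E (3 # replicate k 1) = E [k+2, 1]"
proof -
  have "E (3 # replicate k 1) = CS ((1+2) # replicate k 1) []"
    by (simp add: CS_Nil numeral_3_eq_3)
  also have "\<dots> = CS (1 # replicate k 1) (replicate 2 1 @ [])"
    by (rule CS_transport_rep[symmetric]) simp
  also have "\<dots> = CS (1 # [1]) (replicate (Suc k) 1 @ [])"
    by (subst CS_sym) (simp add: numeral_2_eq_2)
  also have "\<dots> = CS ((1 + Suc k) # [1]) []"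
    by (rule CS_transport_rep) simp
  finally show ?thesis by (simp add: CS_Nil)
qed

lemma E_dual2: "E (4 # replicate k 1) = E [k+2, 1, 1]"
proof -
  have "E (4 # replicate k 1) = CS ((1+3) # replicate k 1) []"
    by (simp add: CS_Nil)
  also have "\<dots> = CS (1 # replicate k 1) (replicate 3 1 @ [])"
    by (rule CS_transport_rep[symmetric]) simp
  also have "\<dots> = CS (1 # [1, 1]) (replicate (Suc k) 1 @ [])"
    by (subst CS_sym) (simp add: numeral_3_eq_3)
  also have "\<dots> = CS ((1 + Suc k) # [1, 1]) []"
    by (rule CS_transport_rep) simp
  finally show ?thesis by (simp add: CS_Nil)
qed

lemma E_dual0: "E (2 # replicate r 1) = E [r+2]"
proof -
  have "E (2 # replicate r 1) = CS ((1+1) # replicate r 1) []"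
    by (simp add: CS_Nil numeral_2_eq_2)
  also have "\<dots> = CS (1 # replicate r 1) (replicate 1 1 @ [])"
    by (rule CS_transport_rep[symmetric]) simp
  also have "\<dots> = CS (1 # []) (replicate (Suc r) 1 @ [])"
    by (subst CS_sym) simp
  also have "\<dots> = CS ((1 + Suc r) # []) []"
    by (rule CS_transport_rep) simp
  finally show ?thesis by (simp add: CS_Nil)
qed


lemma Zf_mono_idx: "list_all2 (\<lambda>a b. b \<le> a) as bs \<Longrightarrow> Zf N as \<le> Zf N bs"
proof (induction as arbitrary: bs N)
  case Nil then show ?case by simp
next
  case (Cons a as)
  then obtain b bs' where bs: "bs = b # bs'" and ba: "b \<le> a" and r: "list_all2 (\<lambda>a b. b \<le> a) as bs'"
    by (cases bs) auto
  have "Zf N (a#as) \<le> Zf N (b#bs')"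
    unfolding Zf.simps
  proof (rule sum_mono)
    fix n assume n: "n \<in> {1..N}"
    have "1 / real n ^ a \<le> 1 / real n ^ b"
      using n ba by (intro divide_left_mono power_increasing) auto
    then show "1 / real n ^ a * Zf (n - 1) as \<le> 1 / real n ^ b * Zf (n - 1) bs'"
      using Cons.IH[OF r] by (intro mult_mono) (auto simp: Zf_nonneg)
  qed
  then show ?case by (simp add: bs)
qed

lemma Top_mono_idx: assumes h: "list_all2 (\<lambda>a b. b \<le> a) as bs" shows "Top as n \<le> Top bs n"
proof (cases as)
  case Nil
  then show ?thesis using h by (simp)
next
  case (Cons a r)
  from h obtain b bs' where bs: "bs = b # bs'" and ba: "b \<le> a" and rr: "list_all2 (\<lambda>a b. b \<le> a) r bs'"
    using Cons by (cases bs) auto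
  show ?thesis
  proof (cases "n = 0")
    case True then show ?thesis by (simp add: Cons bs Top_Cons)
  next
    case False
    have "1 / real n ^ a \<le> 1 / real n ^ b"
      using False ba by (intro divide_left_mono power_increasing) auto
    then have "1 / real n ^ a * Zf (n-1) r \<le> 1 / real n ^ b * Zf (n-1) bs'"
      using Zf_mono_idx[OF rr, of "n-1"] by (intro mult_mono) (auto simp: Zf_nonneg)
    then show ?thesis using False by (simp only: Cons bs Top_Cons if_False)
  qed
qed

lemma E_single_finite: assumes "2 \<le> a" shows "E [a] \<noteq> top"
proof -
  have "Top [a] n = inverse (real n ^ a)" for n
    using assms by (simp add: Top_Cons divide_inverse)
  then have "E [a] = (\<Sum>n. ennreal (inverse (real n ^ a)))" by (simp add: E_def)
  also have "\<dots> = ennreal (\<Sum>n. inverse (real n ^ a))"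
    by (rule suminf_ennreal2) (auto intro: inverse_power_summable assms)
  finally show ?thesis by simp
qed

definition adm :: "nat list \<Rightarrow> bool" where
  "adm as \<longleftrightarrow> as \<noteq> [] \<and> 2 \<le> hd as \<and> (\<forall>a\<in>set as. 1 \<le> a)"

lemma E_finite: assumes "adm as" shows "E as \<noteq> top"
proof -
  obtain a r where as: "as = a # r" and a: "2 \<le> a" and r: "\<forall>x\<in>set r. 1 \<le> x"
    using assms by (cases as) (auto simp: adm_def)
  have la: "list_all2 (\<lambda>a b. b \<le> a) as (2 # replicate (length r) 1)"
  proof -
    have "list_all2 (\<lambda>a b. b \<le> a) r (replicate (length r) 1)"
      using r by (induction r) auto
    then show ?thesis using a by (simp add: as)
  qed
  have "E as \<le> E (2 # replicate (length r) 1)"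
    unfolding E_def by (intro suminf_le ennreal_leI Top_mono_idx[OF la]) auto
  also have "\<dots> = E [length r + 2]" by (rule E_dual0)
  finally show ?thesis using E_single_finite[of "length r + 2"]
    by (auto simp: top_unique)
qed

lemma E_real: assumes "E as \<noteq> top"
  shows "summable (Top as)" "(\<lambda>N. Zf N as) \<longlonglongrightarrow> suminf (Top as)"
    "E as = ennreal (suminf (Top as))"
proof -
  have "(\<Sum>i. ennreal (Top as i)) \<noteq> top" using assms by (simp add: E_def)
  then show s: "summable (Top as)"
    by (rule summable_suminf_not_top[rotated]) (rule Top_nonneg)
  have "(\<lambda>N. \<Sum>i<N. Top as i) \<longlonglongrightarrow> suminf (Top as)"
    using summable_LIMSEQ[OF s] .
  then have "(\<lambda>N. \<Sum>i<Suc N. Top as i) \<longlonglongrightarrow> suminf (Top as)"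
    by (rule LIMSEQ_Suc)
  moreover have "(\<Sum>i<Suc N. Top as i) = Zf N as" for N
    by (simp only: Zf_Top lessThan_Suc_atMost)
  ultimately show "(\<lambda>N. Zf N as) \<longlonglongrightarrow> suminf (Top as)" by simp
  show "E as = ennreal (suminf (Top as))"
    unfolding E_def by (rule suminf_ennreal2) (rule Top_nonneg, rule s)
qed


definition DS :: "nat \<Rightarrow> nat \<Rightarrow> nat list set" where
  "DS r N = {ns. length ns = r \<and> sorted_wrt (>) ns \<and> (\<forall>n\<in>set ns. 1 \<le> n \<and> n \<le> N)}"

definition FF :: "nat list \<Rightarrow> nat list \<Rightarrow> real" where
  "FF as ns = (\<Prod>i<length as. 1 / real (ns ! i) ^ (as ! i))"

lemma FF_nonneg: "0 \<le> FF as ns"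
  by (auto simp: FF_def intro!: prod_nonneg)

lemma finite_DS: "finite (DS r N)"
proof -
  have "DS r N \<subseteq> {xs. set xs \<subseteq> {0..N} \<and> length xs \<le> r}" by (auto simp: DS_def)
  moreover have "finite {xs. set xs \<subseteq> {0..N} \<and> length xs \<le> r}"
    by (rule finite_lists_length_le) simp
  ultimately show ?thesis by (rule finite_subset)
qed

lemma DS_Suc: "DS (Suc r) N = (\<lambda>(n,ns). n#ns) ` (SIGMA n:{1..N}. DS r (n-1))"
proof (intro equalityI subsetI)
  fix xs assume "xs \<in> DS (Suc r) N"
  then obtain n ns where xs: "xs = n # ns" and h: "length ns = r" "\<forall>y\<in>set ns. y < n" "sorted_wrt (>) ns"
     "1 \<le> n" "n \<le> N" "\<forall>y\<in>set ns. 1 \<le> y \<and> y \<le> N"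
    by (auto simp: DS_def length_Suc_conv)
  then have "(n, ns) \<in> (SIGMA n:{1..N}. DS r (n-1))"
    by (auto simp: DS_def)
  then show "xs \<in> (\<lambda>(n,ns). n#ns) ` (SIGMA n:{1..N}. DS r (n-1))"
    using xs by force
next
  fix xs assume "xs \<in> (\<lambda>(n,ns). n#ns) ` (SIGMA n:{1..N}. DS r (n-1))"
  then obtain n ns where xs: "xs = n # ns" and n: "1 \<le> n" "n \<le> N" and ns: "ns \<in> DS r (n-1)"
    by auto
  then show "xs \<in> DS (Suc r) N"
    by (fastforce simp: DS_def)
qed

lemma FF_Cons: "FF (a#as) (n#ns) = 1 / real n ^ a * FF as ns"
  unfolding FF_def length_Cons prod.lessThan_Suc_shift by simp

lemma Zf_DS: "Zf N as = (\<Sum>ns\<in>DS (length as) N. FF as ns)"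
proof (induction as arbitrary: N)
  case Nil
  have "DS 0 N = {[]}" by (auto simp: DS_def)
  then show ?case by (simp add: FF_def)
next
  case (Cons a as)
  have inj: "inj_on (\<lambda>(n,ns). n#ns) (SIGMA n:{1..N}. DS (length as) (n-1))"
    by (auto simp: inj_on_def)
  have "(\<Sum>ns\<in>DS (length (a#as)) N. FF (a#as) ns)
      = (\<Sum>p\<in>(SIGMA n:{1..N}. DS (length as) (n-1)). FF (a#as) ((\<lambda>(n,ns). n#ns) p))"
    by (simp only: length_Cons DS_Suc sum.reindex[OF inj] o_def)
  also have "\<dots> = (\<Sum>n\<in>{1..N}. \<Sum>ns\<in>DS (length as) (n-1). FF (a#as) (n#ns))"
    by (subst sum.Sigma) (auto simp: finite_DS intro!: sum.cong)
  also have "\<dots> = (\<Sum>n\<in>{1..N}. 1 / real n ^ a * Zf (n-1) as)"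
    by (simp add: FF_Cons Cons.IH sum_distrib_left)
  finally show ?case by simp
qed

lemma mzv_FF: "mzv as = infsum (FF as) {ns. length ns = length as \<and> sorted_wrt (>) ns \<and> (\<forall>n\<in>set ns. 1 \<le> n)}"
  unfolding mzv_def FF_def by (rule refl)

lemma mzv_eq: assumes "E as \<noteq> top" shows "mzv as = suminf (Top as)"
proof -
  define S where "S = {ns :: nat list. length ns = length as \<and> sorted_wrt (>) ns \<and> (\<forall>n\<in>set ns. 1 \<le> n)}"
  define L where "L = suminf (Top as)"
  note E = E_real[OF assms]
  have ZL: "Zf N as \<le> L" for N
  proof -
    have "Zf N as = (\<Sum>i\<in>{..<Suc N}. Top as i)" by (simp only: Zf_Top lessThan_Suc_atMost)
    also have "\<dots> \<le> L" unfolding L_def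
      by (rule sum_le_suminf) (auto simp: E Top_nonneg)
    finally show ?thesis .
  qed
  have DSS: "DS (length as) N \<subseteq> S" for N by (auto simp: DS_def S_def)
  have cover: "G \<subseteq> DS (length as) (\<Sum>ns\<in>G. sum_list ns)" if "finite G" "G \<subseteq> S" for G :: "nat list set"
  proof
    fix ns assume ns: "ns \<in> G"
    have "\<forall>n\<in>set ns. n \<le> (\<Sum>ns\<in>G. sum_list ns)"
    proof
      fix n assume "n \<in> set ns"
      then have "n \<le> sum_list ns" by (rule member_le_sum_list) auto
      also have "\<dots> \<le> (\<Sum>ns\<in>G. sum_list ns)"
        by (rule member_le_sum) (use ns that in auto)
      finally show "n \<le> (\<Sum>ns\<in>G. sum_list ns)" .
    qed
    then show "ns \<in> DS (length as) (\<Sum>ns\<in>G. sum_list ns)"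
      using ns that by (auto simp: DS_def S_def)
  qed
  have bound: "sum (FF as) G \<le> L" if "finite G" "G \<subseteq> S" for G :: "nat list set"
  proof -
    have "sum (FF as) G \<le> sum (FF as) (DS (length as) (\<Sum>ns\<in>G. sum_list ns))"
      by (rule sum_mono2[OF finite_DS cover[OF that]]) (simp add: FF_nonneg)
    also have "\<dots> \<le> L" using ZL by (simp add: Zf_DS)
    finally show ?thesis .
  qed
  have summ: "FF as summable_on S"
    by (rule nonneg_bdd_above_summable_on) (auto simp: FF_nonneg bdd_above_def intro!: exI[of _ L] bound)
  have le: "infsum (FF as) S \<le> L"
    by (rule infsum_le_finite_sums[OF summ bound])
  have ge: "Zf N as \<le> infsum (FF as) S" for N
    unfolding Zf_DS by (rule finite_sum_le_infsum[OF summ finite_DS DSS]) (simp add: FF_nonneg)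
  have "L \<le> infsum (FF as) S"
    using E(2) ge unfolding L_def by (intro LIMSEQ_le_const2[OF E(2)]) auto
  with le show ?thesis by (simp add: mzv_FF S_def L_def)
qed

lemma mzv_facts: assumes "adm as"
  shows "(\<lambda>N. Zf N as) \<longlonglongrightarrow> mzv as" "E as = ennreal (mzv as)"
  using E_real[OF E_finite[OF assms]] mzv_eq[OF E_finite[OF assms]] by auto



fun Zw :: "nat \<Rightarrow> nat list \<Rightarrow> real" where
  "Zw N [] = 1"
| "Zw N (a#as) = (\<Sum>n=1..N. 1 / real n ^ a * Zw n as)"

definition hk :: "nat \<Rightarrow> nat \<Rightarrow> real" where "hk N k = Zw N (replicate k 1)"
definition ek :: "nat \<Rightarrow> nat \<Rightarrow> real" where "ek N k = Zf N (replicate k 1)"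

lemma hk_0 [simp]: "hk N 0 = 1" by (simp add: hk_def)
lemma ek_0 [simp]: "ek N 0 = 1" by (simp add: ek_def)
lemma hk_N0 [simp]: "hk 0 (Suc k) = 0" by (simp add: hk_def)
lemma ek_N0 [simp]: "ek 0 (Suc k) = 0" by (simp add: ek_def)

lemma hk_Suc: "hk (Suc N) (Suc k) = hk N (Suc k) + 1 / real (Suc N) * hk (Suc N) k"
  by (simp add: hk_def)
lemma ek_Suc: "ek (Suc N) (Suc k) = ek N (Suc k) + 1 / real (Suc N) * ek N k"
  by (simp add: ek_def)

lemma harm_0 [simp]: "harm i 0 = 0" by (simp add: harm_def)
lemma harm_Suc: "harm i (Suc N) = harm i N + (1 / real (Suc N)) ^ i"
  by (simp add: harm_def power_one_over)

lemma sum_split_last: "(\<Sum>i=1..Suc k. f i) = (\<Sum>i=1..k. f i) + (f (Suc k) :: real)"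
  by simp

lemma sum_split_first: "(\<Sum>i=1..Suc k. f i) = f 1 + (\<Sum>i=1..k. (f (Suc i) :: real))"
proof -
  have "(\<Sum>i=1..Suc k. f i) = f 1 + (\<Sum>i=Suc 1..Suc k. f i)"
    by (rule sum.atLeast_Suc_atMost) simp
  also have "(\<Sum>i=Suc 1..Suc k. f i) = (\<Sum>i=1..k. f (Suc i))"
    by (rule sum.shift_bounds_cl_Suc_ivl)
  finally show ?thesis .
qed

lemma newton_h: "real k * hk N k = (\<Sum>i=1..k. harm i N * hk N (k - i))"
proof (induction N arbitrary: k)
  case 0
  then show ?case by (cases k) auto
next
  case (Suc N)
  define x where "x = 1 / real (Suc N)"
  define A where "A = hk (Suc N)"
  define B where "B = hk N"
  define q where "q = (\<lambda>i. harm i N)"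
  have p: "harm i (Suc N) = q i + x ^ i" for i by (simp add: harm_Suc q_def x_def)
  have AB: "A j = B j + x * (if j = 0 then 0 else A (j - 1))" for j
    by (cases j) (auto simp: A_def B_def x_def hk_Suc)
  have IHB: "real k * B k = (\<Sum>i=1..k. q i * B (k - i))" for k
    using Suc.IH by (simp add: B_def q_def)
  have main: "real k * A k = (\<Sum>i=1..k. (q i + x ^ i) * A (k - i))" for k
  proof (induction k)
    case 0 then show ?case by simp
  next
    case (Suc k)
    have s1: "(\<Sum>i=1..Suc k. q i * A (Suc k - i)) = (\<Sum>i=1..Suc k. q i * B (Suc k - i)) + x * (\<Sum>i=1..k. q i * A (k - i))"
    proof -
      have "(\<Sum>i=1..Suc k. q i * A (Suc k - i)) = (\<Sum>i=1..Suc k. q i * B (Suc k - i) + x * (q i * (if Suc k - i = 0 then 0 else A (Suc k - i - 1))))"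
        by (intro sum.cong refl) (subst AB, simp add: algebra_simps)
      also have "\<dots> = (\<Sum>i=1..Suc k. q i * B (Suc k - i)) + x * (\<Sum>i=1..Suc k. q i * (if Suc k - i = 0 then 0 else A (Suc k - i - 1)))"
        by (simp add: sum.distrib sum_distrib_left)
      also have "(\<Sum>i=1..Suc k. q i * (if Suc k - i = 0 then 0 else A (Suc k - i - 1))) = (\<Sum>i=1..k. q i * A (k - i))"
        by (subst sum_split_last) (auto intro!: sum.cong simp: Suc_diff_le)
      finally show ?thesis .
    qed
    have s2: "(\<Sum>i=1..Suc k. x ^ i * A (Suc k - i)) = x * A k + x * (\<Sum>i=1..k. x ^ i * A (k - i))"
      by (subst sum_split_first) (simp add: sum_distrib_left mult_ac)
    have "real (Suc k) * A (Suc k) = real (Suc k) * B (Suc k) + x * A k + x * (real k * A k)"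
      by (subst AB) (simp add: algebra_simps)
    also have "\<dots> = (\<Sum>i=1..Suc k. q i * B (Suc k - i)) + x * A k + x * (\<Sum>i=1..k. (q i + x ^ i) * A (k - i))"
      by (simp only: IHB Suc.IH)
    also have "\<dots> = (\<Sum>i=1..Suc k. q i * A (Suc k - i)) + (\<Sum>i=1..Suc k. x ^ i * A (Suc k - i))"
      by (simp only: s1 s2 distrib_right sum.distrib) (simp add: algebra_simps)
    also have "\<dots> = (\<Sum>i=1..Suc k. (q i + x ^ i) * A (Suc k - i))"
      by (simp add: distrib_right sum.distrib)
    finally show ?case .
  qed
  show ?case using main[of k] by (simp add: A_def p)
qed


lemma newton_e: "real k * ek N k = (\<Sum>i=1..k. (-1) ^ (i+1) * harm i N * ek N (k - i))"
proof (induction N arbitrary: k)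
  case 0
  then show ?case by (cases k) auto
next
  case (Suc N)
  define x where "x = 1 / real (Suc N)"
  define A where "A = ek (Suc N)"
  define B where "B = ek N"
  define q where "q = (\<lambda>i. harm i N)"
  define sg where "sg = (\<lambda>i::nat. (-1::real) ^ (i+1))"
  have p: "harm i (Suc N) = q i + x ^ i" for i by (simp add: harm_Suc q_def x_def)
  have AB: "A j = B j + x * (if j = 0 then 0 else B (j - 1))" for j
    by (cases j) (auto simp: A_def B_def x_def ek_Suc)
  have IHB: "real k * B k = (\<Sum>i=1..k. sg i * q i * B (k - i))" for k
    using Suc.IH by (simp add: B_def q_def sg_def)
  have main: "real k * A k = (\<Sum>i=1..k. sg i * (q i + x ^ i) * A (k - i))" for k
  proof (cases k)
    case 0 then show ?thesis by simp
  next
    case (Suc k)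
    have s1: "(\<Sum>i=1..Suc k. sg i * q i * A (Suc k - i)) = real (Suc k) * B (Suc k) + x * (real k * B k)"
    proof -
      have "(\<Sum>i=1..Suc k. sg i * q i * A (Suc k - i)) = (\<Sum>i=1..Suc k. sg i * q i * B (Suc k - i) + x * (sg i * q i * (if Suc k - i = 0 then 0 else B (Suc k - i - 1))))"
        by (intro sum.cong refl) (subst AB, simp add: algebra_simps)
      also have "\<dots> = (\<Sum>i=1..Suc k. sg i * q i * B (Suc k - i)) + x * (\<Sum>i=1..Suc k. sg i * q i * (if Suc k - i = 0 then 0 else B (Suc k - i - 1)))"
        by (simp add: sum.distrib sum_distrib_left)
      also have "(\<Sum>i=1..Suc k. sg i * q i * (if Suc k - i = 0 then 0 else B (Suc k - i - 1))) = (\<Sum>i=1..k. sg i * q i * B (k - i))"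
        by (subst sum_split_last) (auto intro!: sum.cong simp: Suc_diff_le)
      finally show ?thesis by (simp only: IHB)
    qed
    have s2: "(\<Sum>i=1..Suc k. sg i * x ^ i * A (Suc k - i)) = x * B k"
    proof -
      have "(\<Sum>i=1..Suc k. sg i * x ^ i * A (Suc k - i)) = (\<Sum>i=1..Suc k. sg i * x ^ i * B (Suc k - i) + x * (sg i * x ^ i * (if Suc k - i = 0 then 0 else B (Suc k - i - 1))))"
        by (intro sum.cong refl) (subst AB, simp add: algebra_simps)
      also have "\<dots> = (\<Sum>i=1..Suc k. sg i * x ^ i * B (Suc k - i)) + x * (\<Sum>i=1..Suc k. sg i * x ^ i * (if Suc k - i = 0 then 0 else B (Suc k - i - 1)))"
        by (simp add: sum.distrib sum_distrib_left)
      also have "(\<Sum>i=1..Suc k. sg i * x ^ i * (if Suc k - i = 0 then 0 else B (Suc k - i - 1))) = (\<Sum>i=1..k. sg i * x ^ i * B (k - i))"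
        by (subst sum_split_last) (auto intro!: sum.cong simp: Suc_diff_le)
      also have "(\<Sum>i=1..Suc k. sg i * x ^ i * B (Suc k - i)) = x * B k - x * (\<Sum>i=1..k. sg i * x ^ i * B (k - i))"
        by (subst sum_split_first) (simp add: sum_distrib_left sg_def sum_negf[symmetric] mult_ac)
      finally show ?thesis by simp
    qed
    have "(\<Sum>i=1..Suc k. sg i * (q i + x ^ i) * A (Suc k - i)) = (\<Sum>i=1..Suc k. sg i * q i * A (Suc k - i)) + (\<Sum>i=1..Suc k. sg i * x ^ i * A (Suc k - i))"
      by (simp add: sum.distrib algebra_simps)
    also have "\<dots> = real (Suc k) * (B (Suc k) + x * B k)"
      by (simp only: s1 s2) (simp add: algebra_simps)
    also have "\<dots> = real (Suc k) * A (Suc k)" using AB[of "Suc k"] by simp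
    finally show ?thesis using Suc by simp
  qed
  show ?case using main[of k] by (simp add: A_def p sg_def mult.assoc)
qed


definition TT :: "nat \<Rightarrow> (nat \<Rightarrow> nat) \<Rightarrow> (nat \<Rightarrow> real) \<Rightarrow> real" where
  "TT n m y = (\<Prod>j=1..n. (y j / real j) ^ m j / fact (m j))"

lemma polyQ_TT: "polyQ n y = (\<Sum>m\<in>partvecs n. TT n m y)"
  unfolding polyQ_def TT_def by (intro sum.cong refl) (simp add: prod_dividef)

lemma polyP_Q: "polyP n y = polyQ n (\<lambda>i. (-1) ^ (i+1) * y i)"
  unfolding polyP_def polyQ_def
proof (intro sum.cong refl)
  fix m
  have "(\<Prod>i=1..n. ((-1) ^ (i+1) * y i / real i) ^ m i) = (\<Prod>i=1..n. ((-1::real) ^ (i+1)) ^ m i) * (\<Prod>i=1..n. (y i / real i) ^ m i)"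
    by (simp only: prod.distrib[symmetric] power_mult_distrib[symmetric] times_divide_eq_right mult.assoc)
  also have "(\<Prod>i=1..n. ((-1::real) ^ (i+1)) ^ m i) = (\<Prod>i\<in>{i\<in>{1..n}. even i}. (-1::real) ^ m i)"
    by (subst prod.inter_filter) (auto intro!: prod.cong simp: power_mult[symmetric])
  also have "\<dots> = (-1) ^ (\<Sum>i\<in>{i\<in>{1..n}. even i}. m i)"
    by (simp add: power_sum)
  finally show "(-1) ^ (\<Sum>i\<in>{i\<in>{1..n}. even i}. m i) / (\<Prod>i=1..n. fact (m i)) * (\<Prod>i=1..n. (y i / real i) ^ m i)
      = 1 / (\<Prod>i=1..n. fact (m i)) * (\<Prod>i=1..n. ((-1) ^ (i+1) * y i / real i) ^ m i)"
    by simp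
qed

lemma pv_zero: "m \<in> partvecs n \<Longrightarrow> j \<notin> {1..n} \<Longrightarrow> m j = 0"
  by (auto simp: partvecs_def)

lemma pv_sum: "m \<in> partvecs n \<Longrightarrow> (\<Sum>i=1..n. i * m i) = n"
  by (auto simp: partvecs_def)

lemma pv_le: assumes "m \<in> partvecs n" "j \<in> {1..n}" shows "j * m j \<le> n"
proof -
  have "j * m j \<le> (\<Sum>i=1..n. i * m i)" by (rule member_le_sum) (use assms in auto)
  then show ?thesis using pv_sum[OF assms(1)] by simp
qed

lemma pv_le2: assumes "m \<in> partvecs n" "j \<in> {1..n}" "i \<in> {1..n}" "i \<noteq> j" shows "j * m j + i * m i \<le> n"
proof -
  have "(\<Sum>l\<in>{i,j}. l * m l) \<le> (\<Sum>l=1..n. l * m l)" by (rule sum_mono2) (use assms in auto)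
  then show ?thesis using pv_sum[OF assms(1)] assms by simp
qed

lemma finite_pv: "finite (partvecs n)"
proof -
  have "partvecs n \<subseteq> {f. \<forall>x. (x \<in> {1..n} \<longrightarrow> f x \<in> {0..n}) \<and> (x \<notin> {1..n} \<longrightarrow> f x = 0)}"
  proof safe
    fix m x assume m: "m \<in> partvecs n" and x: "x \<in> {1..n}"
    have "m x \<le> x * m x" using x by simp
    also have "\<dots> \<le> n" by (rule pv_le[OF m x])
    finally show "m x \<in> {0..n}" by simp
  qed (auto simp: pv_zero)
  then show ?thesis by (rule finite_subset) (rule finite_set_of_finite_funs, auto)
qed

lemma polyQ_0: "polyQ 0 y = 1"
proof -
  have "partvecs 0 = {\<lambda>_. 0}" by (auto simp: partvecs_def)
  then show ?thesis by (simp add: polyQ_def)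
qed

lemma TT_ext: assumes "n \<le> n'" "\<And>j. m j \<noteq> 0 \<Longrightarrow> j \<in> {1..n}" shows "TT n m y = TT n' m y"
proof -
  have "m j = 0" if "j \<in> {1..n'} - {1..n}" for j using assms(2)[of j] that by auto
  then have e: "\<forall>j\<in>{1..n'} - {1..n}. (y j / real j) ^ m j / fact (m j) = 1" by simp
  have sub: "{1..n} \<subseteq> {1..n'}" using assms(1) by auto
  show ?thesis unfolding TT_def by (rule prod.mono_neutral_left[OF finite_atLeastAtMost sub e])
qed

lemma TT_split: assumes "i \<in> {1..n}"
  shows "TT n m y = (y i / real i) ^ m i / fact (m i) * (\<Prod>j\<in>{1..n} - {i}. (y j / real j) ^ m j / fact (m j))"
  unfolding TT_def using assms by (simp add: prod.remove)

lemma key_pv: assumes i: "i \<in> {1..k}"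
  shows "(\<Sum>m\<in>partvecs k. real (i * m i) * TT k m y) = y i * polyQ (k - i) y"
proof -
  define S where "S = {m \<in> partvecs k. 0 < m i}"
  define phi where "phi = (\<lambda>m'::nat\<Rightarrow>nat. \<lambda>l. m' l + (if l = i then 1 else 0))"
  define psi where "psi = (\<lambda>m::nat\<Rightarrow>nat. \<lambda>l. m l - (if l = i then 1 else 0))"
  have sum_phi: "(\<Sum>l\<in>A. l * phi m' l) = (\<Sum>l\<in>A. l * m' l) + i" if "finite A" "i \<in> A" for A m'
  proof -
    have "(\<Sum>l\<in>A. l * phi m' l) = (\<Sum>l\<in>A. l * m' l + (if l = i then l else 0))"
      by (intro sum.cong refl) (simp add: phi_def algebra_simps)
    then show ?thesis using that by (simp add: sum.distrib)
  qed
  have step1: "(\<Sum>m\<in>partvecs k. real (i * m i) * TT k m y) = (\<Sum>m\<in>S. real (i * m i) * TT k m y)"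
  proof (rule sum.mono_neutral_right[OF finite_pv])
    show "S \<subseteq> partvecs k" unfolding S_def by blast
    show "\<forall>m\<in>partvecs k - S. real (i * m i) * TT k m y = 0" unfolding S_def by simp
  qed
  have psi_in: "psi m \<in> partvecs (k - i)" if m: "m \<in> S" for m
  proof -
    have mk: "m \<in> partvecs k" and mi: "0 < m i" using m unfolding S_def by blast+
    have supp: "j \<in> {1..k-i}" if "psi m j \<noteq> 0" for j
    proof (cases "j = i")
      case True
      then have "2 \<le> m i" using that by (simp add: psi_def)
      then have "i * 2 \<le> i * m i" by simp
      also have "\<dots> \<le> k" by (rule pv_le[OF mk i])
      finally show ?thesis using True i by auto
    next
      case False
      then have mj: "m j \<noteq> 0" using that by (simp add: psi_def)
      then have j: "j \<in> {1..k}" using pv_zero[OF mk, of j] by (cases "j \<in> {1..k}") simp_all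
      have "j * 1 + i * 1 \<le> j * m j + i * m i" using mj mi by (intro add_mono mult_le_mono) auto
      also have "\<dots> \<le> k" by (rule pv_le2[OF mk j i]) (use False in auto)
      finally show ?thesis using j by auto
    qed
    have ph: "phi (psi m) = m" using mi by (auto simp: phi_def psi_def)
    have "(\<Sum>l=1..k. l * psi m l) + i = k"
      using sum_phi[of "{1..k}" "psi m"] ph pv_sum[OF mk] i by simp
    moreover have "(\<Sum>l=1..k-i. l * psi m l) = (\<Sum>l=1..k. l * psi m l)"
    proof -
      have z: "\<forall>l\<in>{1..k} - {1..k-i}. l * psi m l = 0" using supp by (metis DiffE mult_eq_0_iff)
      show ?thesis by (rule sum.mono_neutral_left[OF finite_atLeastAtMost _ z]) auto
    qed
    ultimately have "(\<Sum>l=1..k-i. l * psi m l) = k - i" by simp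
    then show ?thesis using supp unfolding partvecs_def by blast
  qed
  have phi_in: "phi m' \<in> S" if m': "m' \<in> partvecs (k - i)" for m'
  proof -
    have supp: "j \<in> {1..k}" if "phi m' j \<noteq> 0" for j
    proof (cases "j = i")
      case True then show ?thesis using i by simp
    next
      case False
      then have "m' j \<noteq> 0" using that by (simp add: phi_def)
      then show ?thesis using pv_zero[OF m'] by fastforce
    qed
    have "(\<Sum>l=1..k. l * m' l) = (\<Sum>l=1..k-i. l * m' l)"
    proof -
      have z: "\<forall>l\<in>{1..k} - {1..k-i}. l * m' l = 0" using pv_zero[OF m'] by auto
      show ?thesis by (rule sum.mono_neutral_right[OF finite_atLeastAtMost _ z]) auto
    qed
    then have "(\<Sum>l=1..k. l * phi m' l) = k"
      using sum_phi[of "{1..k}" m'] pv_sum[OF m'] i by simp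
    moreover have "0 < phi m' i" by (simp add: phi_def)
    ultimately show ?thesis using supp unfolding S_def partvecs_def by blast
  qed
  have "(\<Sum>m\<in>S. real (i * m i) * TT k m y) = (\<Sum>m'\<in>partvecs (k - i). y i * TT (k - i) m' y)"
  proof (rule sum.reindex_bij_witness[where i = phi and j = psi])
    fix m assume m: "m \<in> S"
    then show "phi (psi m) = m" by (auto simp: phi_def psi_def S_def)
    show "psi m \<in> partvecs (k - i)" by (rule psi_in[OF m])
    have mi: "0 < m i" using m by (simp add: S_def)
    then obtain t where t: "m i = Suc t" using gr0_implies_Suc by blast
    have pt: "psi m i = t" using t by (simp add: psi_def)
    have rest: "(\<Prod>j\<in>{1..k} - {i}. (y j / real j) ^ psi m j / fact (psi m j)) = (\<Prod>j\<in>{1..k} - {i}. (y j / real j) ^ m j / fact (m j))"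
      by (intro prod.cong refl) (simp add: psi_def)
    have "TT (k - i) (psi m) y = TT k (psi m) y"
    proof -
      have supp': "\<And>j. psi m j \<noteq> 0 \<Longrightarrow> j \<in> {1..k-i}" using psi_in[OF m] unfolding partvecs_def by blast
      show ?thesis by (rule TT_ext[OF _ supp']) simp
    qed
    also have "\<dots> = (y i / real i) ^ t / fact t * (\<Prod>j\<in>{1..k} - {i}. (y j / real j) ^ m j / fact (m j))"
      by (simp only: TT_split[OF i] pt rest)
    finally have A: "TT (k - i) (psi m) y = (y i / real i) ^ t / fact t * (\<Prod>j\<in>{1..k} - {i}. (y j / real j) ^ m j / fact (m j))" .
    have B: "TT k m y = (y i / real i) ^ Suc t / fact (Suc t) * (\<Prod>j\<in>{1..k} - {i}. (y j / real j) ^ m j / fact (m j))"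
      by (simp only: TT_split[OF i] t)
    have ipos: "real i \<noteq> 0" using i by simp
    show "y i * TT (k - i) (psi m) y = real (i * m i) * TT k m y"
      unfolding A B t using ipos by (simp add: fact_Suc field_simps del: of_nat_Suc) (simp add: algebra_simps)
  next
    fix m' assume m': "m' \<in> partvecs (k - i)"
    then show "psi (phi m') = m'" by (auto simp: phi_def psi_def)
    show "phi m' \<in> S" by (rule phi_in[OF m'])
  qed
  then show ?thesis using step1 by (simp add: polyQ_TT sum_distrib_left)
qed

lemma polyQ_rec: "real k * polyQ k y = (\<Sum>i=1..k. y i * polyQ (k - i) y)"
proof -
  have "real k * polyQ k y = (\<Sum>m\<in>partvecs k. real k * TT k m y)"
    by (simp add: polyQ_TT sum_distrib_left)
  also have "\<dots> = (\<Sum>m\<in>partvecs k. (\<Sum>i=1..k. real (i * m i)) * TT k m y)"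
  proof (intro sum.cong refl)
    fix m assume "m \<in> partvecs k"
    then have "(\<Sum>i=1..k. real (i * m i)) = real k"
      using pv_sum by (simp only: of_nat_sum[symmetric])
    then show "real k * TT k m y = (\<Sum>i=1..k. real (i * m i)) * TT k m y" by simp
  qed
  also have "\<dots> = (\<Sum>i=1..k. \<Sum>m\<in>partvecs k. real (i * m i) * TT k m y)"
    by (simp add: sum_distrib_right sum.swap[of _ "partvecs k"])
  also have "\<dots> = (\<Sum>i=1..k. y i * polyQ (k - i) y)"
    by (intro sum.cong refl key_pv) auto
  finally show ?thesis .
qed

lemma rec_unique:
  assumes "f 0 = 1" "g 0 = 1"
    "\<And>k. real k * f k = (\<Sum>i=1..k. y i * f (k - i))"
    "\<And>k. real k * g k = (\<Sum>i=1..k. y i * g (k - i))"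
  shows "f k = (g k :: real)"
proof (induction k rule: less_induct)
  case (less k)
  show ?case
  proof (cases k)
    case 0 then show ?thesis using assms by simp
  next
    case (Suc k')
    have "real k * f k = real k * g k"
      unfolding assms(3,4) by (intro sum.cong refl) (use less Suc in auto)
    then show ?thesis using Suc by simp
  qed
qed

lemma polyQ_harm: "polyQ k (\<lambda>i. harm i N) = hk N k"
  by (rule rec_unique[where y = "\<lambda>i. harm i N"]) (auto simp: polyQ_0 polyQ_rec newton_h)

lemma polyP_harm: "polyP k (\<lambda>i. harm i N) = ek N k"
  unfolding polyP_Q
  by (rule rec_unique[where y = "\<lambda>i. (-1) ^ (i+1) * harm i N"]) (auto simp: polyQ_0 polyQ_rec newton_e mult.assoc)



lemma sum_shift1: "(\<Sum>n<N. f (Suc n)) = (\<Sum>n=1..N. (f n :: real))"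
  by (induction N) auto

lemma adm_mzv_nonneg: assumes "adm as" shows "0 \<le> mzv as"
proof -
  have "E as \<noteq> top" by (rule E_finite[OF assms])
  from E_real[OF this] mzv_eq[OF this] show ?thesis
    by (simp add: suminf_nonneg Top_nonneg)
qed

lemma mzv_eq_of_E: assumes "adm as" "adm bs" "E as = E bs" shows "mzv as = mzv bs"
  using assms mzv_facts(2)[OF assms(1)] mzv_facts(2)[OF assms(2)] adm_mzv_nonneg[OF assms(1)] adm_mzv_nonneg[OF assms(2)]
  by simp

lemma harm_Zf: "Zf M [k] = harm k M"
  by (simp add: harm_def)

lemma harm_pred: "1 \<le> n \<Longrightarrow> harm k n = harm k (n - 1) + 1 / real n ^ k"
  by (cases n) (auto simp: harm_def)

lemma part1: assumes "1 \<le> k"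
  shows "(\<lambda>n. harm k (Suc n) / real (Suc n) ^ 3) sums (mzv [k+3] + mzv [3, k])"
proof -
  have ps: "(\<Sum>n<N. harm k (Suc n) / real (Suc n) ^ 3) = Zf N [k+3] + Zf N [3, k]" for N
  proof -
    have "(\<Sum>n<N. harm k (Suc n) / real (Suc n) ^ 3) = (\<Sum>n=1..N. harm k n / real n ^ 3)"
      by (rule sum_shift1)
    also have "\<dots> = (\<Sum>n=1..N. 1 / real n ^ (k+3) * 1 + 1 / real n ^ 3 * harm k (n-1))"
    proof (intro sum.cong refl)
      fix n assume "n \<in> {1..N}"
      then show "harm k n / real n ^ 3 = 1 / real n ^ (k+3) * 1 + 1 / real n ^ 3 * harm k (n-1)"
        using harm_pred[of n k] by (simp add: field_simps power_add)
    qed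
    also have "\<dots> = Zf N [k+3] + Zf N [3, k]"
      by (simp add: sum.distrib harm_def)
    finally show ?thesis .
  qed
  have "adm [k+3]" "adm [3, k]" using assms by (auto simp: adm_def)
  then have "(\<lambda>N. Zf N [k+3] + Zf N [3, k]) \<longlonglongrightarrow> mzv [k+3] + mzv [3, k]"
    by (intro tendsto_add mzv_facts(1))
  then show ?thesis unfolding sums_def ps .
qed

lemma part2: assumes "1 \<le> k"
  shows "(\<lambda>n. polyP k (\<lambda>i. harm i (Suc n)) / real (Suc n) ^ 3) sums (mzv [k+2, 1] + mzv [k+1, 1, 1])"
proof -
  obtain k' where k: "k = Suc k'" using assms by (cases k) auto
  have ps: "(\<Sum>n<N. polyP k (\<lambda>i. harm i (Suc n)) / real (Suc n) ^ 3)
      = Zf N (3 # replicate k 1) + Zf N (4 # replicate k' 1)" for N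
  proof -
    have "(\<Sum>n<N. polyP k (\<lambda>i. harm i (Suc n)) / real (Suc n) ^ 3) = (\<Sum>n=1..N. ek n k / real n ^ 3)"
      by (simp only: polyP_harm sum_shift1[where f="\<lambda>n. ek n k / real n ^ 3"])
    also have "\<dots> = (\<Sum>n=1..N. 1 / real n ^ 3 * ek (n-1) k + 1 / real n ^ 4 * ek (n-1) k')"
    proof (intro sum.cong refl)
      fix n assume "n \<in> {1..N}"
      then obtain n0 where n: "n = Suc n0" by (cases n) auto
      show "ek n k / real n ^ 3 = 1 / real n ^ 3 * ek (n-1) k + 1 / real n ^ 4 * ek (n-1) k'"
        unfolding n k ek_Suc by (simp add: field_simps power_add del: of_nat_Suc) (simp add: power_Suc[symmetric] del: of_nat_Suc power_Suc)
    qed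
    also have "\<dots> = Zf N (3 # replicate k 1) + Zf N (4 # replicate k' 1)"
      by (simp add: sum.distrib ek_def k)
    finally show ?thesis .
  qed
  have a1: "adm (3 # replicate k 1)" "adm (4 # replicate k' 1)" by (auto simp: adm_def)
  have a2: "adm [k+2, 1]" "adm [k+1, 1, 1]" using k by (auto simp: adm_def)
  have e1: "mzv (3 # replicate k 1) = mzv [k+2, 1]"
    by (rule mzv_eq_of_E[OF a1(1) a2(1) E_dual1])
  have e2: "mzv (4 # replicate k' 1) = mzv [k+1, 1, 1]"
    using mzv_eq_of_E[OF a1(2) _ E_dual2[of k']] a2(2) k by simp
  have "(\<lambda>N. Zf N (3 # replicate k 1) + Zf N (4 # replicate k' 1)) \<longlonglongrightarrow> mzv (3 # replicate k 1) + mzv (4 # replicate k' 1)"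
    using a1 by (intro tendsto_add mzv_facts(1))
  then show ?thesis unfolding sums_def ps e1 e2 .
qed


definition Comp :: "nat \<Rightarrow> nat \<Rightarrow> nat list set" where
  "Comp a j = {bs. bs \<noteq> [] \<and> sum_list bs = a + j \<and> (\<forall>x\<in>set bs. 1 \<le> x) \<and> a \<le> hd bs}"

lemma length_le_sum_list: "(\<forall>x\<in>set bs. 1 \<le> x) \<Longrightarrow> length bs \<le> sum_list (bs :: nat list)"
  by (induction bs) auto

lemma finite_Comp: "finite (Comp a j)"
proof -
  have "Comp a j \<subseteq> {xs. set xs \<subseteq> {0..a+j} \<and> length xs \<le> a+j}"
  proof safe
    fix xs assume "xs \<in> Comp a j"
    then have h: "sum_list xs = a + j" "\<forall>x\<in>set xs. 1 \<le> x" by (auto simp: Comp_def)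
    show "length xs \<le> a + j" using length_le_sum_list[OF h(2)] h(1) by simp
    fix x assume "x \<in> set xs"
    then have "x \<le> sum_list xs" by (rule member_le_sum_list) auto
    then show "x \<in> {0..a+j}" using h(1) by simp
  qed
  moreover have "finite {xs. set xs \<subseteq> {0..a+j} \<and> length xs \<le> a+j}"
    by (rule finite_lists_length_le) simp
  ultimately show ?thesis by (rule finite_subset)
qed

lemma Comp_0: "1 \<le> a \<Longrightarrow> Comp a 0 = {[a]}"
proof (intro equalityI subsetI)
  fix bs assume "bs \<in> Comp a 0"
  then obtain b r where bs: "bs = b # r" and h: "b + sum_list r = a" "a \<le> b" "\<forall>x\<in>set r. 1 \<le> x"
    by (cases bs) (auto simp: Comp_def)
  then have "sum_list r = 0" by linarith
  then have "r = []" using h(3) by (cases r) auto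
  then show "bs \<in> {[a]}" using bs h by simp
qed (auto simp: Comp_def)

lemma Comp_Suc: assumes "1 \<le> a"
  shows "Comp a (Suc j) = (\<lambda>bs. a # bs) ` Comp 1 j \<union> (\<lambda>bs. (a + hd bs) # tl bs) ` Comp 1 j"
proof (intro equalityI subsetI)
  fix cs assume cs: "cs \<in> Comp a (Suc j)"
  then obtain h t where c: "cs = h # t" and hs: "h + sum_list t = a + Suc j" "a \<le> h" "1 \<le> h" "\<forall>x\<in>set t. 1 \<le> x"
    by (cases cs) (auto simp: Comp_def)
  show "cs \<in> (\<lambda>bs. a # bs) ` Comp 1 j \<union> (\<lambda>bs. (a + hd bs) # tl bs) ` Comp 1 j"
  proof (cases "h = a")
    case True
    then have "sum_list t = Suc j" using hs by simp
    then have "t \<noteq> []" by auto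
    then have "1 \<le> hd t" using hs(4) by (cases t) auto
    then have "t \<in> Comp 1 j" using \<open>sum_list t = Suc j\<close> \<open>t \<noteq> []\<close> hs(4) by (auto simp: Comp_def)
    then show ?thesis using c True by blast
  next
    case False
    then have "(h - a) # t \<in> Comp 1 j" using hs by (auto simp: Comp_def)
    moreover have "cs = (a + hd ((h - a) # t)) # tl ((h - a) # t)" using c hs False by simp
    ultimately show ?thesis by blast
  qed
next
  fix cs assume "cs \<in> (\<lambda>bs. a # bs) ` Comp 1 j \<union> (\<lambda>bs. (a + hd bs) # tl bs) ` Comp 1 j"
  then show "cs \<in> Comp a (Suc j)"
  proof
    assume "cs \<in> (\<lambda>bs. a # bs) ` Comp 1 j"
    then obtain bs where "bs \<in> Comp 1 j" "cs = a # bs" by blast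
    then show ?thesis using assms by (auto simp: Comp_def)
  next
    assume "cs \<in> (\<lambda>bs. (a + hd bs) # tl bs) ` Comp 1 j"
    then obtain bs where b: "bs \<in> Comp 1 j" "cs = (a + hd bs) # tl bs" by blast
    then obtain h t where "bs = h # t" by (cases bs) (auto simp: Comp_def)
    then show ?thesis using b by (auto simp: Comp_def)
  qed
qed

lemma Zf_split: "1 \<le> n \<Longrightarrow> Zf n (b # r) = Zf (n-1) (b # r) + 1 / real n ^ b * Zf (n-1) r"
  by (cases n) auto

lemma Zw_Comp: "1 \<le> a \<Longrightarrow> Zw N (a # replicate j 1) = (\<Sum>bs\<in>Comp a j. Zf N bs)"
proof (induction j arbitrary: a N)
  case 0
  then show ?case by (simp add: Comp_0)
next
  case (Suc j)
  have ne: "bs \<noteq> []" if "bs \<in> Comp 1 j" for bs using that by (simp add: Comp_def)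
  have "Zw N (a # replicate (Suc j) 1) = (\<Sum>n=1..N. 1 / real n ^ a * Zw n (1 # replicate j 1))"
    by simp
  also have "\<dots> = (\<Sum>n=1..N. \<Sum>bs\<in>Comp 1 j. 1 / real n ^ a * Zf n bs)"
  proof -
    have IH1: "Zw n (1 # replicate j 1) = (\<Sum>bs\<in>Comp 1 j. Zf n bs)" for n by (rule Suc.IH) simp
    show ?thesis by (simp only: IH1 sum_distrib_left)
  qed
  also have "\<dots> = (\<Sum>n=1..N. \<Sum>bs\<in>Comp 1 j. 1 / real n ^ a * Zf (n-1) bs + 1 / real n ^ (a + hd bs) * Zf (n-1) (tl bs))"
  proof (intro sum.cong refl)
    fix n bs assume n: "n \<in> {1..N}" and bs: "bs \<in> Comp 1 j"
    obtain b r where br: "bs = b # r" using ne[OF bs] by (cases bs) auto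
    show "1 / real n ^ a * Zf n bs = 1 / real n ^ a * Zf (n-1) bs + 1 / real n ^ (a + hd bs) * Zf (n-1) (tl bs)"
    proof -
      have "1 \<le> n" using n by simp
      then show ?thesis unfolding br Zf_split[OF \<open>1 \<le> n\<close>]
        by (simp add: field_simps power_add del: Zf.simps)
    qed
  qed
  also have "\<dots> = (\<Sum>bs\<in>Comp 1 j. Zf N (a # bs)) + (\<Sum>bs\<in>Comp 1 j. Zf N ((a + hd bs) # tl bs))"
    by (simp add: sum.distrib, simp add: sum.swap[where A="{Suc 0..N}"])
  also have "\<dots> = (\<Sum>cs\<in>Comp a (Suc j). Zf N cs)"
  proof -
    have inj1: "inj_on (\<lambda>bs. a # bs) (Comp 1 j)" by (auto simp: inj_on_def)
    have inj2: "inj_on (\<lambda>bs. (a + hd bs) # tl bs) (Comp 1 j)"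
    proof (rule inj_onI)
      fix x y assume x: "x \<in> Comp 1 j" and y: "y \<in> Comp 1 j" and e: "(a + hd x) # tl x = (a + hd y) # tl y"
      then show "x = y" using ne[OF x] ne[OF y] by (cases x; cases y) auto
    qed
    have disj: "(\<lambda>bs. a # bs) ` Comp 1 j \<inter> (\<lambda>bs. (a + hd bs) # tl bs) ` Comp 1 j = {}"
    proof (rule ccontr)
      assume "\<not> ?thesis"
      then obtain x y where x: "x \<in> Comp 1 j" and y: "y \<in> Comp 1 j" and e: "a # x = (a + hd y) # tl y" by blast
      have "1 \<le> hd y" using y by (simp add: Comp_def)
      then show False using e by simp
    qed
    have "(\<Sum>cs\<in>Comp a (Suc j). Zf N cs) = (\<Sum>cs\<in>(\<lambda>bs. a # bs) ` Comp 1 j. Zf N cs) + (\<Sum>cs\<in>(\<lambda>bs. (a + hd bs) # tl bs) ` Comp 1 j. Zf N cs)"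
      unfolding Comp_Suc[OF Suc.prems]
      by (rule sum.union_disjoint[OF finite_imageI[OF finite_Comp] finite_imageI[OF finite_Comp] disj])
    also have "\<dots> = (\<Sum>bs\<in>Comp 1 j. Zf N (a # bs)) + (\<Sum>bs\<in>Comp 1 j. Zf N ((a + hd bs) # tl bs))"
      by (simp only: sum.reindex[OF inj1] sum.reindex[OF inj2] o_def)
    finally show ?thesis by simp
  qed
  finally show ?case .
qed

lemma Comp_lengths: "bs \<in> Comp 3 k \<Longrightarrow> length bs \<in> {1..k+1}"
proof -
  assume bs: "bs \<in> Comp 3 k"
  then obtain b r where br: "bs = b # r" and h: "b + sum_list r = 3 + k" "3 \<le> b" "\<forall>x\<in>set r. 1 \<le> x"
    by (cases bs) (auto simp: Comp_def)
  have "length r \<le> sum_list r" by (rule length_le_sum_list[OF h(3)])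
  then show ?thesis using h br by simp
qed

lemma Comp_sum_ST: "(\<Sum>bs\<in>Comp 3 k. mzv bs) = mzv [k+3] + (\<Sum>j=2..k+1. ST (k+3) j)"
proof -
  have "(\<Sum>bs\<in>Comp 3 k. mzv bs) = (\<Sum>j\<in>{1..k+1}. \<Sum>bs\<in>{bs\<in>Comp 3 k. length bs = j}. mzv bs)"
  proof -
    have sub: "length ` Comp 3 k \<subseteq> {1..k+1}" using Comp_lengths by blast
    show ?thesis by (rule sum.group[OF finite_Comp finite_atLeastAtMost sub, symmetric])
  qed
  also have "\<dots> = (\<Sum>j\<in>{1..k+1}. ST (k+3) j)"
  proof (intro sum.cong refl)
    fix j :: nat assume j: "j \<in> {1..k+1}"
    have "{bs\<in>Comp 3 k. length bs = j} = {as. length as = j \<and> sum_list as = k+3 \<and> (\<forall>a\<in>set as. 1 \<le> a) \<and> 3 \<le> hd as}"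
      using j by (auto simp: Comp_def)
    then show "(\<Sum>bs\<in>{bs\<in>Comp 3 k. length bs = j}. mzv bs) = ST (k+3) j" by (simp add: ST_def)
  qed
  also have "\<dots> = ST (k+3) 1 + (\<Sum>j=2..k+1. ST (k+3) j)"
    by (subst sum.atLeast_Suc_atMost) (auto simp: numeral_2_eq_2)
  also have "ST (k+3) 1 = mzv [k+3]"
  proof -
    have "{as. length as = 1 \<and> sum_list as = k+3 \<and> (\<forall>a\<in>set as. 1 \<le> a) \<and> 3 \<le> hd as} = {[k+3]}"
      by (auto simp: length_Suc_conv)
    then show ?thesis by (simp add: ST_def)
  qed
  finally show ?thesis .
qed

lemma part3: "(\<lambda>n. polyQ k (\<lambda>i. harm i (Suc n)) / real (Suc n) ^ 3) sums (mzv [k+3] + (\<Sum>j=2..k+1. ST (k+3) j))"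
proof -
  have ps: "(\<Sum>n<N. polyQ k (\<lambda>i. harm i (Suc n)) / real (Suc n) ^ 3) = (\<Sum>bs\<in>Comp 3 k. Zf N bs)" for N
  proof -
    have "(\<Sum>n<N. polyQ k (\<lambda>i. harm i (Suc n)) / real (Suc n) ^ 3) = (\<Sum>n=1..N. hk n k / real n ^ 3)"
      by (simp only: polyQ_harm sum_shift1[where f="\<lambda>n. hk n k / real n ^ 3"])
    also have "\<dots> = Zw N (3 # replicate k 1)"
      by (simp add: hk_def divide_inverse mult.commute)
    also have "\<dots> = (\<Sum>bs\<in>Comp 3 k. Zf N bs)" by (rule Zw_Comp) simp
    finally show ?thesis .
  qed
  have "adm bs" if "bs \<in> Comp 3 k" for bs
    using that by (auto simp: Comp_def adm_def)
  then have "(\<lambda>N. \<Sum>bs\<in>Comp 3 k. Zf N bs) \<longlonglongrightarrow> (\<Sum>bs\<in>Comp 3 k. mzv bs)"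
    by (intro tendsto_sum mzv_facts(1))
  then show ?thesis unfolding sums_def ps Comp_sum_ST .
qed

theorem mainTheorem15:
  fixes k :: nat
  assumes "1 \<le> k"
  shows "(\<lambda>n. harm k (Suc n) / real (Suc n) ^ 3) sums (mzv [k+3] + mzv [3, k])
    \<and> (\<lambda>n. polyP k (\<lambda>i. harm i (Suc n)) / real (Suc n) ^ 3)
           sums (mzv [k+2, 1] + mzv [k+1, 1, 1])
    \<and> (\<lambda>n. polyQ k (\<lambda>i. harm i (Suc n)) / real (Suc n) ^ 3)
           sums (mzv [k+3] + (\<Sum>j=2..k+1. ST (k+3) j))"
  using part1[OF assms] part2[OF assms] part3 by blast

end
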